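(* Let $\lambda\in\overline{\mathbb C}_+\setminus\{0\}$ and put $h(x,\lambda)=\big|\exp\big(\tfrac23z(x,\lambda)^{3/2}\big)\big|=\exp\big(\mathrm{Re}\,\lambda\,\xi(x\lambda^{-1/2})\big)$ for $x\ge0$. Then: (1) if $\lambda>0$, then $h(\cdot,\lambda)$ is strictly increasing on $[x_*,\infty)$ and $h(\cdot,\lambda)\equiv1$ on $[0,x_*]$, where $x_*=\sqrt\lambda$; (2) if $0<\arg\lambda\le\pi$, then $h(\cdot,\lambda)$ is strictly increasing on $[0,\infty)$.
   Context: Powers and logarithms are principal on $\mathbb C\setminus(-\infty,0]$. $S(I)=\{re^{i\varphi}:r>0,\varphi\in I\}$. Let $\xi(t)=\int_1^t\sqrt{s^2-1}\,ds=\frac12\big(t\sqrt{t^2-1}-\log(t+\sqrt{t^2-1})\big)$, holomorphic on $S(-\pi/2,0)$ with $\xi(t)>0$ for $t>1$, extended by continuity to $\overline{S(-\pi/2,0)}$ (so $\xi(0)=i\pi/4$). It is a fact that $\xi(t)\ne0$ for $t\ne1$ and $\xi$ takes values with argument in $[-3\pi/2,0]$; let $\Phi(t)\in[-3\pi/2,0]$ be that determination of $\arg\xi(t)$. Define $k(t)=|\tfrac32\xi(t)|^{2/3}e^{\frac23i\Phi(t)}$ (so $k(0)=-(3\pi/8)^{2/3}$, $k>0$ for $t>1$); $k$ is a conformal map of $S(-\pi/2,0)$. For $\lambda=|\lambda|e^{2i\theta}$, $\theta\in[0,\pi/2]$, and $x\ge0$, set $z(x,\lambda)=\lambda^{2/3}k(x\lambda^{-1/2})$,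 and use the convention $\tfrac23z(x,\lambda)^{3/2}:=\lambda\,\xi(x\lambda^{-1/2})$. *)

theory Defs
  imports "HOL-Analysis.Analysis"
begin

text \<open>The branch of sqrt(t^2-1) on the closed sector S[-pi/2,0] that is the continuous
extension of the principal branch from the open sector S(-pi/2,0):
sqrt(t+1) * sqrt(t-1), where sqrt(t-1) is taken as the limit from the lower half plane,
i.e. -i * sqrt(1-t). On the open sector it coincides with the principal csqrt(t^2-1).\<close>
definition sqrt_t2m1 :: "complex \<Rightarrow> complex" where
  "sqrt_t2m1 t = csqrt (t + 1) * (- \<i> * csqrt (1 - t))"

definition xi :: "complex \<Rightarrow> complex" where
  "xi t = (t * sqrt_t2m1 t - Ln (t + sqrt_t2m1 t)) / 2"

definition h_fun :: "real \<Rightarrow> complex \<Rightarrow> real" where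
  "h_fun x lam = exp (Re (lam * xi (of_real x * lam powr (-1/2))))"

end

theory Submission imports Defs begin

lemma s_sq: "(sqrt_t2m1 t)^2 = t^2 - 1"
proof -
  have "(sqrt_t2m1 t)^2 = (csqrt (t+1))^2 * (-\<i>)^2 * (csqrt (1-t))^2"
    unfolding sqrt_t2m1_def by (simp add: power_mult_distrib) (simp add: algebra_simps)
  also have "\<dots> = (t+1) * (-1) * (1-t)" by (simp only: power2_csqrt) (simp add: power2_eq_square)
  also have "\<dots> = t^2 - 1" by (simp add: power2_eq_square algebra_simps)
  finally show ?thesis .
qed

lemma xi_deriv:
  assumes a1: "t + 1 \<notin> \<real>\<^sub>\<le>\<^sub>0" and a2: "1 - t \<notin> \<real>\<^sub>\<le>\<^sub>0"
    and a3: "t + sqrt_t2m1 t \<notin> \<real>\<^sub>\<le>\<^sub>0"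
  shows "(xi has_field_derivative sqrt_t2m1 t) (at t)"
proof -
  define P where "P = csqrt (t+1)"
  define Q where "Q = csqrt (1-t)"
  define s where "s = sqrt_t2m1 t"
  have P0: "P \<noteq> 0" using a1 unfolding P_def by (metis csqrt_eq_0 nonpos_Reals_zero_I) 
  have Q0: "Q \<noteq> 0" using a2 unfolding Q_def by (metis csqrt_eq_0 nonpos_Reals_zero_I) 
  have P2: "P^2 = t+1" "Q^2 = 1-t" unfolding P_def Q_def by auto
  have sPQ: "s = - \<i> * P * Q" unfolding s_def sqrt_t2m1_def P_def Q_def by simp
  have ts0: "t + s \<noteq> 0" using a3 unfolding s_def by (metis nonpos_Reals_zero_I)
  have hP: "((\<lambda>t. csqrt (t+1)) has_field_derivative 1/(2*P)) (at t)"
    unfolding P_def using has_field_derivative_csqrt'[of "\<lambda>t. t+1" 1 t UNIV] a1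
    by (auto intro!: derivative_eq_intros)
  have hQ: "((\<lambda>t. csqrt (1-t)) has_field_derivative -1/(2*Q)) (at t)"
    unfolding Q_def using has_field_derivative_csqrt'[of "\<lambda>t. 1-t" "-1" t UNIV] a2
    by (auto intro!: derivative_eq_intros)
  define s' where "s' = - \<i> * (1/(2*P) * Q + P * (-1/(2*Q)))"
  have hs: "(sqrt_t2m1 has_field_derivative s') (at t)"
  proof -
    have "((\<lambda>t. csqrt (t + 1) * (- \<i> * csqrt (1 - t))) has_field_derivative
        (1/(2*P) * (- \<i> * Q) + P * (- \<i> * (-1/(2*Q))))) (at t)"
      using hP hQ a1 a2 unfolding P_def Q_def by (auto intro!: derivative_eq_intros)
    then show ?thesis unfolding sqrt_t2m1_def[abs_def] s'_def by (simp add: algebra_simps)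
  qed
  have hg: "((\<lambda>t. t + sqrt_t2m1 t) has_field_derivative 1 + s') (at t)"
    using hs by (auto intro!: derivative_eq_intros)
  have hL: "((\<lambda>t. Ln (t + sqrt_t2m1 t)) has_field_derivative (1 + s') * inverse (t + s)) (at t)"
    using DERIV_chain2[where f=Ln and g="\<lambda>t. t + sqrt_t2m1 t" and x=t and Db="1 + s'" and s=UNIV, OF has_field_derivative_Ln[OF a3] hg]
    unfolding s_def by (simp add: mult.commute)
  have hx: "(xi has_field_derivative (1 * s + t * s' - (1 + s') * inverse (t + s)) / 2) (at t)"
    unfolding xi_def[abs_def] using hs hL a3 unfolding s_def
    by (auto intro!: derivative_eq_intros)
  have QQ: "Q*Q = 1 - t" using P2 by (simp add: power2_eq_square)
  have s'eq: "s' = t / s" unfolding s'_def sPQ using P0 Q0 P2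
    by (simp add: field_simps power2_eq_square QQ)
  moreover have "s^2 = t^2 - 1" unfolding s_def by (rule s_sq)
  moreover have s0: "s \<noteq> 0" using sPQ P0 Q0 by simp
  ultimately have "(1 * s + t * s' - (1 + s') * inverse (t + s)) / 2 = s"
  proof -
    have ss: "s * s = t * t - 1" using \<open>s^2 = t^2 - 1\<close> by (simp add: power2_eq_square)
    have "(1 * s + t * s' - (1 + s') * inverse (t + s)) * (s * (t+s)) = (2 * s) * (s * (t+s))"
      unfolding s'eq using s0 ts0 ss by (simp add: field_simps) algebra
    then have "1 * s + t * s' - (1 + s') * inverse (t + s) = 2 * s"
      using s0 ts0 by (subst (asm) mult_right_cancel) (auto simp: add.commute)
    then show ?thesis by simp
  qed
  with hx show ?thesis unfolding s_def by (metis (no_types, lifting))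
qed

lemma Im_csqrt_nonneg: "Im z \<ge> 0 \<Longrightarrow> Im (csqrt z) \<ge> 0"
  by (auto simp: sgn_if complex_Re_le_cmod)

lemma Im_csqrt_nonpos: "Im z \<le> 0 \<Longrightarrow> Re z > 0 \<Longrightarrow> Im (csqrt z) \<le> 0"
proof (cases "Im z = 0")
  case True
  assume "Re z > 0"
  then have "csqrt z = sqrt (Re z)" using True by simp
  then show ?thesis by simp
next
  case False
  assume "Im z \<le> 0"
  with False have "Im z < 0" by simp
  then show ?thesis by (simp add: sgn_if complex_Re_le_cmod)
qed

lemma ts_real:
  assumes "t + sqrt_t2m1 t \<in> \<real>"
  shows "t \<in> \<real>"
proof -
  define s where "s = sqrt_t2m1 t"
  define u where "u = t + s"
  have "(t + s) * (t - s) = t^2 - s^2" by (simp add: power2_eq_square algebra_simps)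
  also have "\<dots> = 1" unfolding s_def s_sq by simp
  finally have e: "u * (t - s) = 1" unfolding u_def .
  then have u0: "u \<noteq> 0" by auto
  have "t - s = inverse u" using e u0 by (simp add: field_simps)
  then have "t = (u + inverse u) / 2" unfolding u_def by (simp add: field_simps) 
  moreover have "u \<in> \<real>" using assms unfolding u_def s_def .
  ultimately show ?thesis by (metis Reals_add Reals_inverse Reals_divide Reals_numeral)
qed

lemma pos_deriv:
  fixes m :: complex and x :: real
  assumes m1: "Re m \<ge> 0" and m2: "Im m > 0" and x0: "x \<ge> 0"
  shows "Re (m * sqrt_t2m1 (of_real x * inverse m)) > 0"
proof -
  define t where "t = of_real x * inverse m"
  define P where "P = csqrt (t+1)"
  define Q where "Q = csqrt (1-t)"
  define u where "u = m * P"
  have m0: "m \<noteq> 0" using m2 by auto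
  have nm: "(Re m)^2 + (Im m)^2 > 0" using m2 by (simp add: add_nonneg_pos)
  have Imt: "Im t \<le> 0" unfolding t_def using x0 m2 nm
    by (simp add: Im_inverse divide_nonpos_pos)
  have Ret: "Re t \<ge> 0" unfolding t_def using x0 m1 nm
    by (simp add: Re_inverse)
  have ReP: "Re P \<ge> 0" "Im P \<le> 0" unfolding P_def
    using Re_csqrt Im_csqrt_nonpos[of "t+1"] Imt Ret by auto
  have "Im (1-t) \<ge> 0" using Imt by simp
  from Im_csqrt_nonneg[OF this] have ReQ: "Re Q \<ge> 0" "Im Q \<ge> 0" unfolding Q_def
    using Re_csqrt[of "1-t"] by blast+
  have Reu: "Re u \<ge> 0"
  proof -
    have "Re u = Re m * Re P - Im m * Im P" by (simp add: u_def)
    moreover have "Re m * Re P \<ge> 0" using m1 ReP by simp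
    moreover have "Im m * Im P \<le> 0" using m2 ReP by (simp add: mult_nonneg_nonpos)
    ultimately show ?thesis by linarith
  qed
  have "u^2 = m^2 * (t+1)" unfolding u_def P_def by (simp add: power_mult_distrib)
  also have "\<dots> = m^2 + of_real x * m" unfolding t_def using m0
    by (simp add: field_simps power2_eq_square)
  finally have u2: "u^2 = m^2 + of_real x * m" .
  have Imu: "Im u \<ge> 0"
  proof (cases "Re u = 0")
    case True
    have a: "Re m * Re P \<ge> 0" "- (Im m * Im P) \<ge> 0" using m1 m2 ReP
      by (auto simp: mult_nonneg_nonneg mult_nonneg_nonpos)
    have "Re m * Re P - Im m * Im P = 0" using True unfolding u_def by simp
    then have "Im m * Im P = 0" using a by linarith
    then have "Im P = 0" using m2 by simp
    then show ?thesis unfolding u_def using m2 ReP by simp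
  next
    case False
    then have up: "Re u > 0" using Reu by simp
    have "Im (u^2) = 2 * Re m * Im m + x * Im m" unfolding u2 by (simp add: power2_eq_square)
    also have "\<dots> \<ge> 0" using m1 m2 x0 by simp
    finally have "2 * Re u * Im u \<ge> 0" by (simp add: power2_eq_square)
    then show ?thesis using up by (simp add: zero_le_mult_iff)
  qed
  have eq: "m * sqrt_t2m1 t = - \<i> * (u * Q)"
    unfolding sqrt_t2m1_def u_def P_def Q_def by (simp add: algebra_simps)
  have Re_eq: "Re (m * sqrt_t2m1 t) = Re u * Im Q + Im u * Re Q"
    unfolding eq by simp
  have ge: "Re (m * sqrt_t2m1 t) \<ge> 0" unfolding Re_eq using Reu Imu ReQ by simp
  have ne: "Re (m * sqrt_t2m1 t) \<noteq> 0"
  proof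
    assume R0: "Re (m * sqrt_t2m1 t) = 0"
    define D where "D = m * sqrt_t2m1 t"
    have "D^2 = m^2 * (t^2 - 1)" unfolding D_def by (simp add: power_mult_distrib s_sq)
    also have "\<dots> = of_real x ^ 2 - m^2" unfolding t_def using m0
      by (simp add: power_mult_distrib field_simps power2_eq_square)
    finally have D2: "D^2 = of_real x ^ 2 - m^2" .
    have "Im (D^2) = 0" "Re (D^2) \<le> 0" using R0 unfolding D_def by (simp_all add: power2_eq_square)
    then have i: "Re m * Im m = 0" and r: "x^2 - (Re m ^2 - Im m ^2) \<le> 0"
      unfolding D2 by (auto simp: power2_eq_square)
    from i m2 have "Re m = 0" by simp
    with r m2 show False by (simp add: power2_eq_square) (smt (verit) mult_pos_pos zero_le_square)
  qed
  show ?thesis using ge ne unfolding t_def by simp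
qed


lemma powr_mhalf: "lam \<noteq> 0 \<Longrightarrow> lam powr (-1/2) = inverse (csqrt lam)"
  by (simp add: powr_def csqrt_exp_Ln exp_minus[symmetric])

lemma part2:
  fixes lam :: complex
  assumes "Im lam \<ge> 0" "lam \<noteq> 0" "0 < Arg lam"
  shows "strict_mono_on {0..} (\<lambda>x. h_fun x lam)"
proof -
  define m where "m = csqrt lam"
  have m0: "m \<noteq> 0" using assms(2) unfolding m_def by simp
  have mm: "m^2 = lam" unfolding m_def by simp
  have m1: "Re m \<ge> 0" unfolding m_def by (rule Re_csqrt)
  have "lam \<notin> \<real>\<^sub>\<ge>\<^sub>0" using assms(3) Arg_eq_0[of lam]
    by (auto simp: complex_nonneg_Reals_iff complex_is_Real_iff)
  then have "Im m \<noteq> 0" unfolding m_def using Im_csqrt_eq_0_iff by blast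
  moreover have "Im m \<ge> 0" unfolding m_def using Im_csqrt_nonneg assms(1) by blast
  ultimately have m2: "Im m > 0" by simp
  define F where "F x = Re (lam * xi (of_real x * inverse m))" for x
  have hF: "h_fun x lam = exp (F x)" for x
    unfolding h_fun_def F_def m_def powr_mhalf[OF assms(2)] by (rule refl)
  have nm: "(Re m)^2 + (Im m)^2 > 0" using m2 by (simp add: add_nonneg_pos)
  have der: "DERIV F x :> Re (m * sqrt_t2m1 (of_real x * inverse m))" if x0: "x \<ge> 0" for x
  proof -
    define t where "t = of_real x * inverse m"
    have Ret: "Re t \<ge> 0" unfolding t_def using x0 m1 nm by (simp add: Re_inverse)
    have Imt: "x > 0 \<Longrightarrow> Im t < 0" unfolding t_def using m2 nm
      by (simp add: Im_inverse divide_neg_pos mult_pos_pos)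
    have a1: "t + 1 \<notin> \<real>\<^sub>\<le>\<^sub>0" using Ret by (auto simp: complex_nonpos_Reals_iff)
    have a2: "1 - t \<notin> \<real>\<^sub>\<le>\<^sub>0"
    proof (cases "x = 0")
      case True then show ?thesis unfolding t_def by simp
    next
      case False then have "Im t < 0" using Imt x0 by simp
      then show ?thesis by (auto simp: complex_nonpos_Reals_iff)
    qed
    have a3: "t + sqrt_t2m1 t \<notin> \<real>\<^sub>\<le>\<^sub>0"
    proof (cases "x = 0")
      case True then show ?thesis unfolding t_def sqrt_t2m1_def by (simp add: complex_nonpos_Reals_iff)
    next
      case False then have "Im t < 0" using Imt x0 by simp
      then have "t \<notin> \<real>" by (auto simp: complex_is_Real_iff)
      then have "t + sqrt_t2m1 t \<notin> \<real>" using ts_real by blast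
      then show ?thesis using nonpos_Reals_subset_Reals by blast
    qed
    have d1: "((\<lambda>z. z * inverse m) has_field_derivative inverse m) (at (of_real x))"
      by (auto intro!: derivative_eq_intros)
    have d2: "((\<lambda>z. lam * xi (z * inverse m)) has_field_derivative lam * (sqrt_t2m1 t * inverse m)) (at (of_real x))"
      using DERIV_chain2[where f=xi and g="\<lambda>z. z * inverse m" and x="of_real x" and s=UNIV,
          OF xi_deriv[OF a1 a2 a3, unfolded t_def] d1] unfolding t_def
      by (rule DERIV_cmult)
    have "lam * (sqrt_t2m1 t * inverse m) = m * sqrt_t2m1 t"
      using m0 mm by (simp add: field_simps power2_eq_square)
    with has_field_derivative_Re[OF has_vector_derivative_real_field[OF d2]]
    show ?thesis unfolding F_def t_def by simp
  qed
  have "F a < F b" if "0 \<le> a" "a < b" for a b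
  proof (rule DERIV_pos_imp_increasing[OF that(2)])
    fix y assume "a \<le> y" "y \<le> b"
    then have y0: "y \<ge> 0" using that by linarith
    show "\<exists>d. DERIV F y :> d \<and> d > 0" using der[OF y0] pos_deriv[OF m1 m2 y0] by blast
  qed
  then show ?thesis unfolding strict_mono_on_def hF by auto
qed


lemma xi_01:
  fixes \<tau> :: real
  assumes "0 \<le> \<tau>" "\<tau> \<le> 1"
  shows "Re (xi (of_real \<tau>)) = 0"
proof -
  define \<sigma> where "\<sigma> = sqrt (\<tau>+1) * sqrt (1-\<tau>)"
  have s: "sqrt_t2m1 (of_real \<tau>) = - \<i> * of_real \<sigma>"
    unfolding sqrt_t2m1_def \<sigma>_def using assms by simp
  have \<sigma>2: "\<sigma>^2 = 1 - \<tau>^2" unfolding \<sigma>_def using assms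
    by (simp add: power_mult_distrib power2_eq_square algebra_simps)
  have n: "cmod (of_real \<tau> - \<i> * of_real \<sigma>) = 1"
    using \<sigma>2 by (simp add: cmod_def power2_eq_square)
  then have nz: "of_real \<tau> - \<i> * of_real \<sigma> \<noteq> 0" by auto
  show ?thesis unfolding xi_def s using n nz by simp
qed

definition G :: "real \<Rightarrow> real" where
  "G \<tau> = (\<tau> * sqrt (\<tau>^2 - 1) - ln (\<tau> + sqrt (\<tau>^2 - 1))) / 2"

lemma xi_ge1:
  fixes \<tau> :: real
  assumes "1 \<le> \<tau>"
  shows "xi (of_real \<tau>) = of_real (G \<tau>)"
proof -
  have "sqrt (\<tau>+1) * sqrt (\<tau>-1) = sqrt (\<tau>^2 - 1)"
    by (simp add: real_sqrt_mult[symmetric] power2_eq_square algebra_simps)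
  then have s: "sqrt_t2m1 (of_real \<tau>) = of_real (sqrt (\<tau>^2 - 1))"
    unfolding sqrt_t2m1_def using assms by (simp flip: of_real_mult)
  have "1 \<le> \<tau>^2" using assms by (rule one_le_power)
  then have "sqrt (\<tau>^2 - 1) \<ge> 0" by simp
  then have pos: "\<tau> + sqrt (\<tau>^2 - 1) > 0" using assms by linarith
  have L: "Ln (of_real \<tau> + of_real (sqrt (\<tau>^2 - 1))) = of_real (ln (\<tau> + sqrt (\<tau>^2 - 1)))"
    unfolding of_real_add[symmetric] by (rule Ln_of_real[OF pos])
  show ?thesis unfolding xi_def s L G_def
    by (simp only: of_real_mult[symmetric] of_real_diff[symmetric] of_real_divide of_real_numeral)
qed

lemma G_deriv_gen:
  fixes S :: "real \<Rightarrow> real"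
  assumes "(S has_real_derivative s') (at \<tau>)" "\<tau> + S \<tau> > 0"
  shows "((\<lambda>\<tau>. (\<tau> * S \<tau> - ln (\<tau> + S \<tau>)) / 2) has_real_derivative
          (1 * S \<tau> + \<tau> * s' - (1 + s') / (\<tau> + S \<tau>)) / 2) (at \<tau>)"
  using assms by (auto intro!: derivative_eq_intros simp: field_simps)

lemma G_mono:
  assumes "1 \<le> a" "a < b"
  shows "G a < G b"
proof (rule DERIV_pos_imp_increasing_open[OF assms(2)])
  show "continuous_on {a..b} G"
  proof -
    have "\<tau> + sqrt (\<tau>^2 - 1) > 0" if "\<tau> \<in> {a..b}" for \<tau>
    proof -
      have "1 \<le> \<tau>" using that assms by simp
      moreover then have "1 \<le> \<tau>^2" by (rule one_le_power)
      then have "sqrt (\<tau>^2 - 1) \<ge> 0" by simp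
      ultimately show ?thesis by linarith
    qed
    then have "\<forall>\<tau>\<in>{a..b}. \<tau> + sqrt (\<tau>^2 - 1) \<noteq> 0" by force
    then show ?thesis unfolding G_def[abs_def]
      by (intro continuous_intros) auto
  qed
next
  fix \<tau> assume t: "a < \<tau>" "\<tau> < b"
  define \<sigma> where "\<sigma> = sqrt (\<tau>^2 - 1)"
  have t1: "\<tau> > 1" using t assms by simp
  have "1 < \<tau>^2" using t1 by (simp add: one_less_power)
  then have q: "\<tau>^2 - 1 > 0" by simp
  have \<sigma>0: "\<sigma> > 0" unfolding \<sigma>_def using q by simp
  have \<sigma>2: "\<sigma> * \<sigma> = \<tau> * \<tau> - 1" unfolding \<sigma>_def using q by (simp add: power2_eq_square)
  have ps: "\<tau> + \<sigma> > 0" using \<sigma>0 t1 by simp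
  define s' where "s' = inverse (sqrt (\<tau>^2 - 1)) / 2 * (2 * \<tau>)"
  have ds: "((\<lambda>\<tau>. sqrt (\<tau>^2 - 1)) has_real_derivative s') (at \<tau>)"
    unfolding s'_def using q by (auto intro!: derivative_eq_intros)
  have s'eq: "s' = \<tau> / \<sigma>" unfolding s'_def \<sigma>_def by (simp add: field_simps)
  have "(G has_real_derivative (1 * \<sigma> + \<tau> * s' - (1 + s') / (\<tau> + \<sigma>)) / 2) (at \<tau>)"
    unfolding G_def[abs_def] \<sigma>_def using G_deriv_gen[OF ds] ps unfolding \<sigma>_def by simp
  moreover have "(1 * \<sigma> + \<tau> * s' - (1 + s') / (\<tau> + \<sigma>)) / 2 = \<sigma>"
  proof -
    have "1 + \<tau> / \<sigma> = (\<tau> + \<sigma>) / \<sigma>" using \<sigma>0 by (simp add: field_simps)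
    then have e1: "(1 + \<tau> / \<sigma>) / (\<tau> + \<sigma>) = 1 / \<sigma>" using ps by simp
    have e2: "\<tau> * (\<tau> / \<sigma>) = (\<sigma> * \<sigma> + 1) / \<sigma>" using \<sigma>2 by (simp add: field_simps)
    show ?thesis unfolding s'eq e1 e2 using \<sigma>0 by (simp add: field_simps)
  qed
  ultimately show "\<exists>y. (G has_real_derivative y) (at \<tau>) \<and> 0 < y" using \<sigma>0 by auto
qed


lemma part1:
  fixes lam :: complex
  assumes "lam \<in> \<real>" "Re lam > 0"
  shows "strict_mono_on {sqrt (Re lam)..} (\<lambda>x. h_fun x lam) \<and>
            (\<forall>x\<in>{0..sqrt (Re lam)}. h_fun x lam = 1)"
proof -
  define r where "r = Re lam"
  have r0: "r > 0" using assms(2) unfolding r_def .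
  have lr: "lam = of_real r" unfolding r_def using assms(1) by (simp add: complex_eq_iff complex_is_Real_iff)
  have l0: "lam \<noteq> 0" using r0 lr by simp
  have sr: "sqrt r > 0" using r0 by simp
  have "lam powr (-1/2) = inverse (csqrt lam)" by (rule powr_mhalf[OF l0])
  also have "\<dots> = of_real (inverse (sqrt r))" unfolding lr using r0 by (simp add: csqrt_of_real)
  finally have c: "lam powr (-1/2) = of_real (inverse (sqrt r))" .
  have hx: "h_fun x lam = exp (r * Re (xi (of_real (x / sqrt r))))" for x
    unfolding h_fun_def c by (simp add: lr divide_inverse)
  have A: "\<forall>x\<in>{0..sqrt r}. h_fun x lam = 1"
  proof
    fix x assume "x \<in> {0..sqrt r}"
    then have "0 \<le> x / sqrt r" "x / sqrt r \<le> 1" using sr by auto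
    then have "Re (xi (of_real (x / sqrt r))) = 0" by (rule xi_01)
    then show "h_fun x lam = 1" unfolding hx by simp
  qed
  have B: "strict_mono_on {sqrt r..} (\<lambda>x. h_fun x lam)"
  proof (rule strict_mono_onI)
    fix a b assume ab: "a \<in> {sqrt r..}" "b \<in> {sqrt r..}" "a < b"
    have a1: "1 \<le> a / sqrt r" using ab sr by simp
    have b1: "1 \<le> b / sqrt r" using ab sr by simp
    have "a / sqrt r < b / sqrt r" using ab sr by (simp add: divide_strict_right_mono)
    then have "G (a / sqrt r) < G (b / sqrt r)" using G_mono a1 by blast
    then have "r * G (a / sqrt r) < r * G (b / sqrt r)" using r0 by simp
    then show "h_fun a lam < h_fun b lam" unfolding hx xi_ge1[OF a1] xi_ge1[OF b1] by simp
  qed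
  show ?thesis using A B unfolding r_def by simp
qed

theorem lemma2p3:
  fixes lam :: complex
  assumes "Im lam \<ge> 0" and "lam \<noteq> 0"
  shows "(lam \<in> \<real> \<and> Re lam > 0 \<longrightarrow>
            strict_mono_on {sqrt (Re lam)..} (\<lambda>x. h_fun x lam) \<and>
            (\<forall>x\<in>{0..sqrt (Re lam)}. h_fun x lam = 1)) \<and>
         (0 < Arg lam \<and> Arg lam \<le> pi \<longrightarrow> strict_mono_on {0..} (\<lambda>x. h_fun x lam))"
  using part1 part2 assms by blast

end
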